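(* Let $Q$ be a non-degenerate self-intersecting quadrangle of perimeter $2$. Then its dual quadrangle $Q^\circ$ is also self-intersecting.
   Context: Identify $\mathbb{R}^2$ with $\mathbb{C}$. A quadrangle $Q=ABCD$ is an ordered 4-tuple of points $A,B,C,D\in\mathbb{C}$: $A$ is the first vertex and the order $A\to B\to C\to D\to A$ is the direction of traversal. Its edge vectors are $z_1=B-A$, $z_2=C-B$, $z_3=D-C$, $z_4=A-D$, so $z_1+z_2+z_3+z_4=0$; its perimeter is $|z_1|+|z_2|+|z_3|+|z_4|$. $Q$ is non-degenerate if each pair of consecutive edge vectors $(z_1,z_2),(z_2,z_3),(z_3,z_4),(z_4,z_1)$ consists of nonzero, non-collinear vectors. A non-degenerate quadrangle is self-intersecting if one of the pairs of opposite edges (segments $AB$ and $CD$, or $BC$ and $DA$) intersect; it is convex if it is not self-intersecting and all its interior angles are less than $\pi$; it is non-convex if it is neither self-intersecting nor convex. Associated plane: for a non-degenerate $Q$ of perimeter $2$, choose $u_1,\dots,u_4\in\mathbb{C}$ with $u_k^2=z_k$, where $u_1$ is an arbitrary square root of $z_1$ and for $k=1,2,3$ the sign of $u_{k+1}$ is chosen so that $\operatorname{Im}(\overline{u_k}u_{k+1})$ has the same sign as $\operatorname{Im}(\overline{z_k}z_{k+1})$. Write $u_k=a_k+i b_k$ and $\bar a=(a_1,a_2,a_3,a_4)$, $\bar b=(b_1,b_2,b_3,b_4)$; these are orthonormal in $\mathbb{R}^4$. Let $\Pi=\operatorname{span}(\bar a,\bar b)$ and $\Pi^\perp$ its orthogonal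 complement. Dual quadrangle: choose an orthonormal basis $(\bar c,\bar d)$ of $\Pi^\perp$, put $w_k=(c_k+i d_k)^2$; then $\sum_k w_k=0$ and $\sum_k|w_k|=2$. The dual quadrangle $Q^\circ=KLMN$ is the quadrangle with $L-K=w_1$, $M-L=w_2$, $N-M=w_3$, $K-N=w_4$. It is determined up to rotation, reflection and translation. *)

theory Defs
  imports "HOL-Analysis.Analysis"
begin

type_synonym quad = "complex \<times> complex \<times> complex \<times> complex"

text \<open>Edge vectors, indexed 0..3: z_1 = B-A, z_2 = C-B, z_3 = D-C, z_4 = A-D.\<close>
definition edge :: "quad \<Rightarrow> nat \<Rightarrow> complex" where
  "edge Q k = (case Q of (A, B, C, D) \<Rightarrow>
     (if k = 0 then B - A else if k = 1 then C - B else if k = 2 then D - C else A - D))"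

definition perimeter :: "quad \<Rightarrow> real" where
  "perimeter Q = (\<Sum>k<4. cmod (edge Q k))"

definition nondegenerate :: "quad \<Rightarrow> bool" where
  "nondegenerate Q \<longleftrightarrow> (\<forall>k<4. edge Q k \<noteq> 0 \<and> edge Q ((k + 1) mod 4) \<noteq> 0 \<and>
       \<not> collinear {0, edge Q k, edge Q ((k + 1) mod 4)})"

definition self_intersecting :: "quad \<Rightarrow> bool" where
  "self_intersecting Q \<longleftrightarrow> nondegenerate Q \<and>
     (case Q of (A, B, C, D) \<Rightarrow>
        closed_segment A B \<inter> closed_segment C D \<noteq> {} \<or>
        closed_segment B C \<inter> closed_segment D A \<noteq> {})"

text \<open>Admissible choice of square roots u_k (indices 0..3) of the edge vectors, with the
  sign convention of the associated plane.\<close>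
definition assoc_roots :: "quad \<Rightarrow> (nat \<Rightarrow> complex) \<Rightarrow> bool" where
  "assoc_roots Q u \<longleftrightarrow> (\<forall>k<4. (u k)\<^sup>2 = edge Q k) \<and>
     (\<forall>k<3. sgn (Im (cnj (u k) * u (k + 1))) = sgn (Im (cnj (edge Q k) * edge Q (k + 1))))"

text \<open>(c,d) is an orthonormal basis of the orthogonal complement in R^4 of
  span(a,b), where a_k = Re u_k, b_k = Im u_k (a, b orthonormal, so any orthonormal pair
  orthogonal to both spans the complement).\<close>
definition perp_onb :: "(nat \<Rightarrow> complex) \<Rightarrow> (nat \<Rightarrow> real) \<Rightarrow> (nat \<Rightarrow> real) \<Rightarrow> bool" where
  "perp_onb u c d \<longleftrightarrow>
     (\<Sum>k<4. c k * Re (u k)) = 0 \<and> (\<Sum>k<4. c k * Im (u k)) = 0 \<and>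
     (\<Sum>k<4. d k * Re (u k)) = 0 \<and> (\<Sum>k<4. d k * Im (u k)) = 0 \<and>
     (\<Sum>k<4. c k * c k) = 1 \<and> (\<Sum>k<4. d k * d k) = 1 \<and> (\<Sum>k<4. c k * d k) = 0"

definition dual_quad :: "complex \<Rightarrow> (nat \<Rightarrow> real) \<Rightarrow> (nat \<Rightarrow> real) \<Rightarrow> quad" where
  "dual_quad K c d = (let w = (\<lambda>k. (Complex (c k) (d k))\<^sup>2) in
     (K, K + w 0, K + w 0 + w 1, K + w 0 + w 1 + w 2))"

end

theory Submission imports Defs begin
definition cr :: "complex \<Rightarrow> complex \<Rightarrow> real" where
  "cr z w = Im (cnj z * w)"

lemma cr_eq: "cr z w = Re z * Im w - Im z * Re w"
  by (simp add: cr_def)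

lemma col_iff: "collinear {0, z, w} \<longleftrightarrow> cr z w = 0"
proof
  assume "collinear {0, z, w}"
  then consider "z = 0" | "w = 0" | c where "w = c *\<^sub>R z" by (auto simp: collinear_lemma)
  then show "cr z w = 0" by cases (auto simp: cr_eq algebra_simps)
next
  assume h: "cr z w = 0"
  show "collinear {0, z, w}"
  proof (cases "z = 0")
    case True thus ?thesis by (simp add: collinear_lemma)
  next
    case False
    hence nz: "Re z ^ 2 + Im z ^ 2 \<noteq> 0" by (simp add: complex_eq_iff)
    define t where "t = (Re z * Re w + Im z * Im w) / (Re z ^ 2 + Im z ^ 2)"
    have h': "Re z * Im w = Im z * Re w" using h by (simp add: cr_eq)
    have "Re w = t * Re z"
    proof -
      have "(Re z * Re w + Im z * Im w) * Re z = Re w * (Re z ^ 2 + Im z ^ 2)"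
        using h' by (simp add: power2_eq_square algebra_simps)
      thus ?thesis unfolding t_def using nz by (simp add: field_simps)
    qed
    moreover have "Im w = t * Im z"
    proof -
      have "(Re z * Re w + Im z * Im w) * Im z = Im w * (Re z ^ 2 + Im z ^ 2)"
        using h' by (simp add: power2_eq_square algebra_simps)
      thus ?thesis unfolding t_def using nz by (simp add: field_simps)
    qed
    ultimately have "w = t *\<^sub>R z" by (simp add: complex_eq_iff)
    thus ?thesis by (auto simp: collinear_lemma)
  qed
qed

definition xq :: "quad \<Rightarrow> nat \<Rightarrow> real" where
  "xq P k = cr (edge P k) (edge P ((k+1) mod 4))"

lemma edge_simps:
  "edge (A,B,C,D) 0 = B - A" "edge (A,B,C,D) 1 = C - B"
  "edge (A,B,C,D) 2 = D - C" "edge (A,B,C,D) 3 = A - D"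
  by (simp_all add: edge_def)

lemma xq_simps:
  "xq (A,B,C,D) 0 = cr (B-A) (C-B)" "xq (A,B,C,D) 1 = cr (C-B) (D-C)"
  "xq (A,B,C,D) 2 = cr (D-C) (A-D)" "xq (A,B,C,D) 3 = cr (A-D) (B-A)"
  by (simp_all add: xq_def edge_def)

lemma xq_area: "xq P 0 + xq P 2 = xq P 1 + xq P 3"
  by (cases P) (simp add: xq_def edge_def cr_eq algebra_simps)

lemma nondeg_xq: "nondegenerate P \<Longrightarrow> k < 4 \<Longrightarrow> xq P k \<noteq> 0"
  unfolding nondegenerate_def xq_def col_iff by auto

lemma cr_zero: "cr 0 w = 0" "cr z 0 = 0" by (simp_all add: cr_def)

lemma xq_nondeg: "(\<And>k. k < 4 \<Longrightarrow> xq P k \<noteq> 0) \<Longrightarrow> nondegenerate P"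
  unfolding nondegenerate_def xq_def col_iff by (metis cr_zero)

lemma sign_aux:
  fixes X Y t :: real
  assumes "(1-t)*X + t*Y = 0" "0 \<le> t" "t \<le> 1"
  shows "X * Y \<le> 0"
proof (rule ccontr)
  assume "\<not> X*Y \<le> 0"
  hence "X*Y > 0" by simp
  hence "(X>0 \<and> Y>0) \<or> (X<0 \<and> Y<0)" by (simp add: zero_less_mult_iff)
  thus False
  proof
    assume h: "X>0 \<and> Y>0"
    have "(1-t)*X \<ge> 0" "t*Y \<ge> 0" using h assms by auto
    hence "(1-t)*X = 0" "t*Y = 0" using assms(1) by linarith+
    thus False using h by auto
  next
    assume h: "X<0 \<and> Y<0"
    have "(1-t)*X \<le> 0" "t*Y \<le> 0" using h assms by (auto simp: mult_nonneg_nonpos)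
    hence "(1-t)*X = 0" "t*Y = 0" using assms(1) by linarith+
    thus False using h by auto
  qed
qed

lemma seg_nec:
  fixes A B C D :: complex
  assumes "closed_segment A B \<inter> closed_segment C D \<noteq> {}"
  shows "cr (B-A) (C-A) * cr (B-A) (D-A) \<le> 0 \<and> cr (D-C) (A-C) * cr (D-C) (B-C) \<le> 0"
proof -
  obtain x where x1: "x \<in> closed_segment A B" and x2: "x \<in> closed_segment C D" using assms by blast
  obtain s where s: "x = (1 - s) *\<^sub>R A + s *\<^sub>R B" "0 \<le> s" "s \<le> 1" using x1 by (auto simp: in_segment)
  obtain t where t: "x = (1 - t) *\<^sub>R C + t *\<^sub>R D" "0 \<le> t" "t \<le> 1" using x2 by (auto simp: in_segment)
  have ex: "Re x = (1-s)*Re A + s*Re B" "Im x = (1-s)*Im A + s*Im B" using s by simp_all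
  have ey: "Re x = (1-t)*Re C + t*Re D" "Im x = (1-t)*Im C + t*Im D" using t by simp_all
  have "(1-t) * cr (B-A) (C-A) + t * cr (B-A) (D-A) = 0"
  proof -
    have "(1-t) * cr (B-A) (C-A) + t * cr (B-A) (D-A) = (Re B - Re A) * (Im x - Im A) - (Im B - Im A) * (Re x - Re A)"
      unfolding cr_eq ey by (simp add: algebra_simps)
    also have "\<dots> = 0" unfolding ex by (simp add: algebra_simps)
    finally show ?thesis .
  qed
  moreover have "(1-s) * cr (D-C) (A-C) + s * cr (D-C) (B-C) = 0"
  proof -
    have "(1-s) * cr (D-C) (A-C) + s * cr (D-C) (B-C) = (Re D - Re C) * (Im x - Im C) - (Im D - Im C) * (Re x - Re C)"
      unfolding cr_eq ex by (simp add: algebra_simps)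
    also have "\<dots> = 0" unfolding ey by (simp add: algebra_simps)
    finally show ?thesis .
  qed
  ultimately show ?thesis using sign_aux s t by blast
qed

lemma seg_suf:
  fixes A B C D :: complex
  assumes "cr (B-A) (C-A) * cr (B-A) (D-A) < 0" "cr (D-C) (A-C) * cr (D-C) (B-C) < 0"
  shows "closed_segment A B \<inter> closed_segment C D \<noteq> {}"
proof -
  define X where "X = cr (B-A) (C-A)"
  define Y where "Y = cr (B-A) (D-A)"
  define X' where "X' = cr (D-C) (A-C)"
  define Y' where "Y' = cr (D-C) (B-C)"
  have XY: "X*Y < 0" "X'*Y' < 0" using assms X_def Y_def X'_def Y'_def by auto
  have dXY: "X - Y \<noteq> 0"
  proof
    assume "X - Y = 0" hence "X*Y = X*X" by simp
    thus False using XY by (smt (verit) zero_le_square)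
  qed
  have dd: "X' - Y' = -(X - Y)" unfolding X_def Y_def X'_def Y'_def cr_eq by (simp add: algebra_simps)
  define t where "t = X / (X - Y)"
  define s where "s = X' / (X' - Y')"
  have t01: "0 \<le> t \<and> t \<le> 1"
  proof (cases "X > 0")
    case True hence "Y < 0" using XY by (auto simp: mult_less_0_iff)
    thus ?thesis using True unfolding t_def by (simp add: divide_simps)
  next
    case False hence "X < 0" using XY by (cases "X = 0") auto
    hence "Y > 0" using XY by (auto simp: mult_less_0_iff)
    thus ?thesis using \<open>X < 0\<close> unfolding t_def by (simp add: divide_simps)
  qed
  have s01: "0 \<le> s \<and> s \<le> 1"
  proof (cases "X' > 0")
    case True hence "Y' < 0" using XY by (auto simp: mult_less_0_iff)
    thus ?thesis using True unfolding s_def by (simp add: divide_simps)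
  next
    case False hence "X' < 0" using XY by (cases "X' = 0") auto
    hence "Y' > 0" using XY by (auto simp: mult_less_0_iff)
    thus ?thesis using \<open>X' < 0\<close> unfolding s_def by (simp add: divide_simps)
  qed
  define x where "x = (1 - t) *\<^sub>R C + t *\<^sub>R D"
  have "x = (1 - s) *\<^sub>R A + s *\<^sub>R B"
  proof -
    have key1: "(X - Y) * Re C + X * (Re D - Re C) = (X - Y) * Re A - X' * (Re B - Re A)"
      unfolding X_def Y_def X'_def cr_eq minus_complex.sel by algebra
    have key2: "(X - Y) * Im C + X * (Im D - Im C) = (X - Y) * Im A - X' * (Im B - Im A)"
      unfolding X_def Y_def X'_def cr_eq minus_complex.sel by algebra
    have sdef: "s = - X' / (X - Y)" unfolding s_def dd by (simp add: divide_minus_right[symmetric])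
    have r1: "Re x = ((X-Y)*Re C + X*(Re D - Re C))/(X-Y)"
    proof -
      have "Re x = Re C + t*(Re D - Re C)" unfolding x_def by (simp add: algebra_simps)
      also have "\<dots> = ((X-Y)*Re C + X*(Re D - Re C))/(X-Y)"
        unfolding t_def using dXY by (simp add: add_divide_distrib)
      finally show ?thesis .
    qed
    have r2: "Im x = ((X-Y)*Im C + X*(Im D - Im C))/(X-Y)"
    proof -
      have "Im x = Im C + t*(Im D - Im C)" unfolding x_def by (simp add: algebra_simps)
      also have "\<dots> = ((X-Y)*Im C + X*(Im D - Im C))/(X-Y)"
        unfolding t_def using dXY by (simp add: add_divide_distrib)
      finally show ?thesis .
    qed
    have r3: "Re x = Re A + s * (Re B - Re A)"
      unfolding r1 key1 sdef using dXY by (simp add: diff_divide_distrib)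
    have r4: "Im x = Im A + s * (Im B - Im A)"
      unfolding r2 key2 sdef using dXY by (simp add: diff_divide_distrib)
    show ?thesis using r3 r4 by (simp add: complex_eq_iff algebra_simps)
  qed
  hence "x \<in> closed_segment A B" using s01 by (auto simp: in_segment)
  moreover have "x \<in> closed_segment C D" using t01 unfolding x_def by (auto simp: in_segment)
  ultimately show ?thesis by blast
qed

lemma si_nec:
  assumes "self_intersecting P"
  shows "(xq P 0 * xq P 3 \<le> 0 \<and> xq P 1 * xq P 2 \<le> 0) \<or> (xq P 0 * xq P 1 \<le> 0 \<and> xq P 2 * xq P 3 \<le> 0)"
proof -
  obtain A B C D where P: "P = (A,B,C,D)" by (cases P) auto
  have i: "cr (B-A) (C-A) = xq P 0" "cr (B-A) (D-A) = xq P 3" "cr (D-C) (A-C) = xq P 2" "cr (D-C) (B-C) = xq P 1"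
    "cr (C-B) (D-B) = xq P 1" "cr (C-B) (A-B) = xq P 0" "cr (A-D) (B-D) = xq P 3" "cr (A-D) (C-D) = xq P 2"
    unfolding P xq_def edge_def cr_eq by (simp_all add: algebra_simps)
  from assms have "closed_segment A B \<inter> closed_segment C D \<noteq> {} \<or> closed_segment B C \<inter> closed_segment D A \<noteq> {}"
    unfolding self_intersecting_def P by simp
  thus ?thesis
  proof
    assume "closed_segment A B \<inter> closed_segment C D \<noteq> {}"
    from seg_nec[OF this] show ?thesis unfolding i by (simp add: mult.commute)
  next
    assume "closed_segment B C \<inter> closed_segment D A \<noteq> {}"
    from seg_nec[OF this] show ?thesis unfolding i by (simp add: mult.commute)
  qed
qed

lemma si_suf:
  assumes nz: "\<And>k. k < 4 \<Longrightarrow> xq P k \<noteq> 0"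
    and h: "(xq P 0 * xq P 3 < 0 \<and> xq P 1 * xq P 2 < 0) \<or> (xq P 0 * xq P 1 < 0 \<and> xq P 2 * xq P 3 < 0)"
  shows "self_intersecting P"
proof -
  obtain A B C D where P: "P = (A,B,C,D)" by (cases P) auto
  have i: "cr (B-A) (C-A) = xq P 0" "cr (B-A) (D-A) = xq P 3" "cr (D-C) (A-C) = xq P 2" "cr (D-C) (B-C) = xq P 1"
    "cr (C-B) (D-B) = xq P 1" "cr (C-B) (A-B) = xq P 0" "cr (A-D) (B-D) = xq P 3" "cr (A-D) (C-D) = xq P 2"
    unfolding P xq_def edge_def cr_eq by (simp_all add: algebra_simps)
  have "closed_segment A B \<inter> closed_segment C D \<noteq> {} \<or> closed_segment B C \<inter> closed_segment D A \<noteq> {}"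
    using h
  proof
    assume "xq P 0 * xq P 3 < 0 \<and> xq P 1 * xq P 2 < 0"
    hence "cr (B-A) (C-A) * cr (B-A) (D-A) < 0" "cr (D-C) (A-C) * cr (D-C) (B-C) < 0"
      unfolding i by (simp_all add: mult.commute)
    from seg_suf[OF this] show ?thesis by blast
  next
    assume "xq P 0 * xq P 1 < 0 \<and> xq P 2 * xq P 3 < 0"
    hence "cr (C-B) (D-B) * cr (C-B) (A-B) < 0" "cr (A-D) (B-D) * cr (A-D) (C-D) < 0"
      unfolding i by (simp_all add: mult.commute)
    from seg_suf[OF this] show ?thesis by blast
  qed
  thus ?thesis unfolding self_intersecting_def P using xq_nondeg[OF nz] P by simp
qed

lemma wedge_lemma:
  fixes W01 W02 W03 W12 W13 W23 c0 c1 c2 c3 d0 d1 d2 d3 :: real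
  assumes Ec0: "c1*W23 - c2*W13 + c3*W12 = 0" and Ec1: "c0*W23 - c2*W03 + c3*W02 = 0"
    and Ec2: "c0*W13 - c1*W03 + c3*W01 = 0" and Ec3: "c0*W12 - c1*W02 + c2*W01 = 0"
  and Ed0: "d1*W23 - d2*W13 + d3*W12 = 0" and Ed1: "d0*W23 - d2*W03 + d3*W02 = 0"
    and Ed2: "d0*W13 - d1*W03 + d3*W01 = 0" and Ed3: "d0*W12 - d1*W02 + d2*W01 = 0"
    and cc: "c0*c0+c1*c1+c2*c2+c3*c3 = 1" and dd: "d0*d0+d1*d1+d2*d2+d3*d3 = 1"
    and cd: "c0*d0+c1*d1+c2*d2+c3*d3 = 0"
  defines "D \<equiv> (W01*(c0*d1-c1*d0)+W02*(c0*d2-c2*d0)+W03*(c0*d3-c3*d0)+W12*(c1*d2-c2*d1)+W13*(c1*d3-c3*d1)+W23*(c2*d3-c3*d2))"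
  shows "W01 = D*(c0*d1-c1*d0) \<and> W02 = D*(c0*d2-c2*d0) \<and> W03 = D*(c0*d3-c3*d0) \<and> W12 = D*(c1*d2-c2*d1) \<and> W13 = D*(c1*d3-c3*d1) \<and> W23 = D*(c2*d3-c3*d2)"
  unfolding D_def using assms by (intro conjI; algebra)

lemma minors_lemma:
  fixes a0 a1 a2 a3 b0 b1 b2 b3 c0 c1 c2 c3 d0 d1 d2 d3 :: real
  assumes aa: "a0*a0+a1*a1+a2*a2+a3*a3 = 1" and bb: "b0*b0+b1*b1+b2*b2+b3*b3 = 1"
    and ab: "a0*b0+a1*b1+a2*b2+a3*b3 = 0"
    and ca: "c0*a0+c1*a1+c2*a2+c3*a3 = 0" and cb: "c0*b0+c1*b1+c2*b2+c3*b3 = 0"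
    and da: "d0*a0+d1*a1+d2*a2+d3*a3 = 0" and db: "d0*b0+d1*b1+d2*b2+d3*b3 = 0"
    and cc: "c0*c0+c1*c1+c2*c2+c3*c3 = 1" and dd: "d0*d0+d1*d1+d2*d2+d3*d3 = 1"
    and cd: "c0*d0+c1*d1+c2*d2+c3*d3 = 0"
  shows "\<exists>D. (D = 1 \<or> D = -1) \<and> a2*b3 - a3*b2 = D*(c0*d1-c1*d0) \<and> -(a1*b3 - a3*b1) = D*(c0*d2-c2*d0)
    \<and> a1*b2-a2*b1 = D*(c0*d3-c3*d0) \<and> a0*b3 - a3*b0 = D*(c1*d2-c2*d1)
    \<and> -(a0*b2-a2*b0) = D*(c1*d3-c3*d1) \<and> a0*b1 - a1*b0 = D*(c2*d3-c3*d2)"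
proof -
  define W01 where "W01 = a2*b3 - a3*b2"
  define W02 where "W02 = -(a1*b3 - a3*b1)"
  define W03 where "W03 = a1*b2-a2*b1"
  define W12 where "W12 = a0*b3 - a3*b0"
  define W13 where "W13 = -(a0*b2-a2*b0)"
  define W23 where "W23 = a0*b1 - a1*b0"
  have "c1*W23 - c2*W13 + c3*W12 = a0*(c0*b0+c1*b1+c2*b2+c3*b3) - b0*(c0*a0+c1*a1+c2*a2+c3*a3)"
    unfolding W12_def W13_def W23_def by algebra
  hence Ec0: "c1*W23 - c2*W13 + c3*W12 = 0" using ca cb by simp
  have "c0*W23 - c2*W03 + c3*W02 = b1*(c0*a0+c1*a1+c2*a2+c3*a3) - a1*(c0*b0+c1*b1+c2*b2+c3*b3)"
    unfolding W02_def W03_def W23_def by algebra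
  hence Ec1: "c0*W23 - c2*W03 + c3*W02 = 0" using ca cb by simp
  have "c0*W13 - c1*W03 + c3*W01 = a2*(c0*b0+c1*b1+c2*b2+c3*b3) - b2*(c0*a0+c1*a1+c2*a2+c3*a3)"
    unfolding W01_def W03_def W13_def by algebra
  hence Ec2: "c0*W13 - c1*W03 + c3*W01 = 0" using ca cb by simp
  have "c0*W12 - c1*W02 + c2*W01 = b3*(c0*a0+c1*a1+c2*a2+c3*a3) - a3*(c0*b0+c1*b1+c2*b2+c3*b3)"
    unfolding W01_def W02_def W12_def by algebra
  hence Ec3: "c0*W12 - c1*W02 + c2*W01 = 0" using ca cb by simp
  have "d1*W23 - d2*W13 + d3*W12 = a0*(d0*b0+d1*b1+d2*b2+d3*b3) - b0*(d0*a0+d1*a1+d2*a2+d3*a3)"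
    unfolding W12_def W13_def W23_def by algebra
  hence Ed0: "d1*W23 - d2*W13 + d3*W12 = 0" using da db by simp
  have "d0*W23 - d2*W03 + d3*W02 = b1*(d0*a0+d1*a1+d2*a2+d3*a3) - a1*(d0*b0+d1*b1+d2*b2+d3*b3)"
    unfolding W02_def W03_def W23_def by algebra
  hence Ed1: "d0*W23 - d2*W03 + d3*W02 = 0" using da db by simp
  have "d0*W13 - d1*W03 + d3*W01 = a2*(d0*b0+d1*b1+d2*b2+d3*b3) - b2*(d0*a0+d1*a1+d2*a2+d3*a3)"
    unfolding W01_def W03_def W13_def by algebra
  hence Ed2: "d0*W13 - d1*W03 + d3*W01 = 0" using da db by simp
  have "d0*W12 - d1*W02 + d2*W01 = b3*(d0*a0+d1*a1+d2*a2+d3*a3) - a3*(d0*b0+d1*b1+d2*b2+d3*b3)"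
    unfolding W01_def W02_def W12_def by algebra
  hence Ed3: "d0*W12 - d1*W02 + d2*W01 = 0" using da db by simp
  define D where "D = (W01*(c0*d1-c1*d0)+W02*(c0*d2-c2*d0)+W03*(c0*d3-c3*d0)+W12*(c1*d2-c2*d1)+W13*(c1*d3-c3*d1)+W23*(c2*d3-c3*d2))"
  have WD: "W01 = D*(c0*d1-c1*d0) \<and> W02 = D*(c0*d2-c2*d0) \<and> W03 = D*(c0*d3-c3*d0) \<and> W12 = D*(c1*d2-c2*d1) \<and> W13 = D*(c1*d3-c3*d1) \<and> W23 = D*(c2*d3-c3*d2)"
    unfolding D_def by (rule wedge_lemma[OF Ec0 Ec1 Ec2 Ec3 Ed0 Ed1 Ed2 Ed3 cc dd cd])
  have sW: "W01^2+W02^2+W03^2+W12^2+W13^2+W23^2 = (a0*a0+a1*a1+a2*a2+a3*a3)*(b0*b0+b1*b1+b2*b2+b3*b3) - (a0*b0+a1*b1+a2*b2+a3*b3)^2"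
    unfolding W01_def W02_def W03_def W12_def W13_def W23_def by algebra
  have sQ: "(c0*d1-c1*d0)^2+(c0*d2-c2*d0)^2+(c0*d3-c3*d0)^2+(c1*d2-c2*d1)^2+(c1*d3-c3*d1)^2+(c2*d3-c3*d2)^2 = (c0*c0+c1*c1+c2*c2+c3*c3)*(d0*d0+d1*d1+d2*d2+d3*d3) - (c0*d0+c1*d1+c2*d2+c3*d3)^2"
    by algebra
  have "W01^2+W02^2+W03^2+W12^2+W13^2+W23^2 = D^2 * ((c0*d1-c1*d0)^2+(c0*d2-c2*d0)^2+(c0*d3-c3*d0)^2+(c1*d2-c2*d1)^2+(c1*d3-c3*d1)^2+(c2*d3-c3*d2)^2)"
    using WD by (simp add: power_mult_distrib distrib_left)
  hence "D^2 = 1" using sW sQ aa bb ab cc dd cd by simp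
  hence "D = 1 \<or> D = -1" by (simp add: power2_eq_1_iff)
  thus ?thesis using WD unfolding W01_def W02_def W03_def W12_def W13_def W23_def by blast
qed
lemma rows_orth:
  fixes M :: "nat \<Rightarrow> nat \<Rightarrow> real"
  assumes G: "\<And>m l. m<n \<Longrightarrow> l<n \<Longrightarrow> (\<Sum>i<n. M i m * M i l) = (if m = l then 1 else 0)"
    and jk: "j < n" "k < n"
  shows "(\<Sum>m<n. M j m * M k m) = (if j = k then 1 else 0)"
proof -
  define R where "R j k = (\<Sum>m<n. M j m * M k m)" for j k
  define e where "e j k = (if j = k then 1 else (0::real))" for j k :: nat
  have sq: "(\<Sum>j<n. \<Sum>k<n. (R j k)^2) = (\<Sum>j<n. \<Sum>k<n. \<Sum>m<n. \<Sum>l<n. M j m * M k m * (M j l * M k l))"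
    unfolding R_def power2_eq_square sum_product by simp
  also have "\<dots> = (\<Sum>m<n. \<Sum>l<n. \<Sum>j<n. \<Sum>k<n. M j m * M j l * (M k m * M k l))"
  proof -
    have "(\<Sum>j<n. \<Sum>k<n. \<Sum>m<n. \<Sum>l<n. M j m * M k m * (M j l * M k l))
       = (\<Sum>j<n. \<Sum>m<n. \<Sum>k<n. \<Sum>l<n. M j m * M k m * (M j l * M k l))"
      by (rule sum.cong[OF refl], rule sum.swap)
    also have "\<dots> = (\<Sum>m<n. \<Sum>j<n. \<Sum>k<n. \<Sum>l<n. M j m * M k m * (M j l * M k l))"
      by (rule sum.swap)
    also have "\<dots> = (\<Sum>m<n. \<Sum>j<n. \<Sum>l<n. \<Sum>k<n. M j m * M k m * (M j l * M k l))"
      by (rule sum.cong[OF refl], rule sum.cong[OF refl], rule sum.swap)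
    also have "\<dots> = (\<Sum>m<n. \<Sum>l<n. \<Sum>j<n. \<Sum>k<n. M j m * M k m * (M j l * M k l))"
      by (rule sum.cong[OF refl], rule sum.swap)
    finally show ?thesis by (simp add: algebra_simps)
  qed
  also have "\<dots> = (\<Sum>m<n. \<Sum>l<n. (\<Sum>j<n. M j m * M j l) * (\<Sum>k<n. M k m * M k l))"
    by (simp add: sum_product)
  also have "\<dots> = (\<Sum>m<n. \<Sum>l<n. e m l)"
    by (intro sum.cong refl) (simp add: G e_def)
  finally have sq2: "(\<Sum>j<n. \<Sum>k<n. (R j k)^2) = (\<Sum>m<n. \<Sum>l<n. e m l)" .
  have ee: "(\<Sum>m<n. \<Sum>l<n. e m l) = real n"
    by (simp add: e_def sum.delta)
  have ee2: "(\<Sum>m<n. \<Sum>l<n. (e m l)^2) = real n"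
  proof -
    have "(e m l)^2 = e m l" for m l by (simp add: e_def)
    then show ?thesis using ee by simp
  qed
  have eR: "(\<Sum>j<n. \<Sum>k<n. e j k * R j k) = real n"
  proof -
    have "(\<Sum>j<n. \<Sum>k<n. e j k * R j k) = (\<Sum>j<n. R j j)"
    proof -
      have "e j k * R j k = (if j = k then R j k else 0)" for j k by (simp add: e_def)
      then show ?thesis by (simp add: sum.delta sum.delta')
    qed
    also have "\<dots> = (\<Sum>m<n. \<Sum>j<n. M j m * M j m)" unfolding R_def by (rule sum.swap)
    also have "\<dots> = real n" by (simp add: G)
    finally show ?thesis .
  qed
  have tot: "(\<Sum>j<n. \<Sum>k<n. (e j k - R j k)^2) = 0"
  proof -
    have "(\<Sum>j<n. \<Sum>k<n. (e j k - R j k)^2)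
        = (\<Sum>j<n. \<Sum>k<n. (e j k)^2) - 2 * (\<Sum>j<n. \<Sum>k<n. e j k * R j k) + (\<Sum>j<n. \<Sum>k<n. (R j k)^2)"
      by (simp add: power2_diff sum.distrib sum_subtractf sum_distrib_left mult.assoc)
    then show ?thesis using ee ee2 eR sq2 by simp
  qed
  have "\<forall>j\<in>{..<n}. (\<Sum>k<n. (e j k - R j k)^2) = 0"
    using tot by (subst (asm) sum_nonneg_eq_0_iff) (auto intro: sum_nonneg)
  then have "(e j k - R j k)^2 = 0"
    using jk by (auto simp: sum_nonneg_eq_0_iff)
  then show ?thesis by (simp add: R_def e_def)
qed
lemma combi:
  fixes R0 R1 R2 R3 I0 I1 I2 I3 dl xa xb xc xd :: real
  assumes R: "R0>0" "R1>0" "R2>0"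
    and nz: "I0 \<noteq> 0" "I1 \<noteq> 0" "I2 \<noteq> 0" "I3 \<noteq> 0" "R3 \<noteq> 0"
    and s0: "xa > 0 \<longleftrightarrow> I0 > 0" "xa < 0 \<longleftrightarrow> I0 < 0"
    and s1: "xb > 0 \<longleftrightarrow> I1 > 0" "xb < 0 \<longleftrightarrow> I1 < 0"
    and s2: "xc > 0 \<longleftrightarrow> I2 > 0" "xc < 0 \<longleftrightarrow> I2 < 0"
    and s3: "xd > 0 \<longleftrightarrow> R3*I3 > 0" "xd < 0 \<longleftrightarrow> R3*I3 < 0"
    and area: "xa + xc = xb + xd"
    and si: "(xa*xd \<le> 0 \<and> xb*xc \<le> 0) \<or> (xa*xb \<le> 0 \<and> xc*xd \<le> 0)"
    and dl: "dl = 1 \<or> dl = -1"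
  shows "2*(-R0)*(dl*I2) \<noteq> 0 \<and> 2*(-R1)*(-dl*I3) \<noteq> 0 \<and> 2*(-R2)*(dl*I0) \<noteq> 0 \<and> 2*(-R3)*(-dl*I1) \<noteq> 0 \<and>
    ((2*(-R0)*(dl*I2) * (2*(-R3)*(-dl*I1)) < 0 \<and> 2*(-R1)*(-dl*I3) * (2*(-R2)*(dl*I0)) < 0) \<or>
     (2*(-R0)*(dl*I2) * (2*(-R1)*(-dl*I3)) < 0 \<and> 2*(-R2)*(dl*I0) * (2*(-R3)*(-dl*I1)) < 0))"
proof -
  have c: "\<And>x::real. x \<noteq> 0 \<Longrightarrow> x > 0 \<or> x < 0" by auto
  show ?thesis
  using dl c[OF nz(1)] c[OF nz(2)] c[OF nz(3)] c[OF nz(4)] c[OF nz(5)]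
  proof (elim disjE)
  qed (insert R area si s0 s1 s2 s3, auto simp: mult_less_0_iff zero_less_mult_iff mult_le_0_iff)
qed

lemma sum4: "(\<Sum>k<4. f k) = f 0 + f 1 + f 2 + (f 3 :: 'a::comm_monoid_add)" for f :: "nat \<Rightarrow> 'a::comm_monoid_add"
  by (simp add: eval_nat_numeral add.assoc)

lemma im_sq_sq: "Im (cnj (x^2) * y^2) = 2 * Re (cnj x * y) * Im (cnj x * y)"
proof -
  have "cnj (x^2) * y^2 = (cnj x * y)^2" by (simp add: power_mult_distrib)
  thus ?thesis by (simp add: Im_power2)
qed

theorem theorem4p1:
  fixes Q :: quad and u :: "nat \<Rightarrow> complex" and c d :: "nat \<Rightarrow> real" and K :: complex
  assumes "nondegenerate Q" and "self_intersecting Q" and "perimeter Q = 2"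
    and "assoc_roots Q u" and "perp_onb u c d"
  shows "self_intersecting (dual_quad K c d)"
proof -
  define z where "z = edge Q"
  from assms(4) have ur: "\<And>k. k<4 \<Longrightarrow> (u k)^2 = z k"
    and sg: "\<And>k. k<3 \<Longrightarrow> sgn (Im (cnj (u k) * u (k+1))) = sgn (Im (cnj (z k) * z (k+1)))"
    unfolding assoc_roots_def z_def by auto
  define R where "R k = Re (cnj (u k) * u ((k+1) mod 4))" for k
  define I where "I k = Im (cnj (u k) * u ((k+1) mod 4))" for k
  have xRI: "xq Q k = 2 * R k * I k" if "k<4" for k
  proof -
    have "xq Q k = Im (cnj ((u k)^2) * (u ((k+1) mod 4))^2)"
      using ur[OF that] ur[of "(k+1) mod 4"] by (simp add: xq_def cr_def z_def)
    also have "\<dots> = 2 * R k * I k" unfolding im_sq_sq R_def I_def ..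
    finally show ?thesis .
  qed
  have xnz: "xq Q k \<noteq> 0" if "k<4" for k using nondeg_xq[OF assms(1) that] .
  have IRnz: "I k \<noteq> 0 \<and> R k \<noteq> 0" if "k<4" for k using xnz[OF that] xRI[OF that] by auto
  have Rpos: "R k > 0" if "k<3" for k
  proof -
    have k4: "k < 4" "(k+1) mod 4 = k+1" using that by auto
    have "sgn (I k) = sgn (xq Q k)"
      using sg[OF that] k4 by (simp add: I_def xq_def cr_def z_def)
    also have "\<dots> = sgn (R k) * sgn (I k)" using xRI[OF k4(1)] by (simp add: sgn_mult)
    finally have "sgn (R k) = 1" using IRnz[OF k4(1)] by (simp add: sgn_0_0)
    thus ?thesis by (simp add: sgn_1_pos)
  qed
  define a where "a k = Re (u k)" for k
  define b where "b k = Im (u k)" for k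
  have zsum: "z 0 + z 1 + z 2 + z 3 = 0" unfolding z_def by (cases Q) (simp add: edge_def)
  hence usum: "(u 0)^2 + (u 1)^2 + (u 2)^2 + (u 3)^2 = 0" using ur by simp
  have cm: "cmod (z k) = a k * a k + b k * b k" if "k<4" for k
  proof -
    have "cmod (z k) = (cmod (u k))^2" using ur[OF that] by (metis norm_power)
    also have "\<dots> = (Re (u k))^2 + (Im (u k))^2" by (rule cmod_power2)
    finally show ?thesis by (simp add: a_def b_def power2_eq_square)
  qed
  have per: "cmod (z 0) + cmod (z 1) + cmod (z 2) + cmod (z 3) = 2"
    using assms(3) unfolding perimeter_def sum4 z_def .
  have re0: "Re ((u 0)^2 + (u 1)^2 + (u 2)^2 + (u 3)^2) = 0" using usum by simp
  have im0: "Im ((u 0)^2 + (u 1)^2 + (u 2)^2 + (u 3)^2) = 0" using usum by simp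
  have re1: "(a 0*a 0 + a 1*a 1 + a 2*a 2 + a 3*a 3) - (b 0*b 0 + b 1*b 1 + b 2*b 2 + b 3*b 3) = 0"
    using re0 by (simp add: Re_power2 a_def b_def power2_eq_square algebra_simps)
  have ab: "a 0*b 0 + a 1*b 1 + a 2*b 2 + a 3*b 3 = 0"
    using im0 by (simp add: Im_power2 a_def b_def algebra_simps)
  have pr: "(a 0*a 0 + a 1*a 1 + a 2*a 2 + a 3*a 3) + (b 0*b 0 + b 1*b 1 + b 2*b 2 + b 3*b 3) = 2"
    using per cm[of 0] cm[of 1] cm[of 2] cm[of 3] by simp
  have aa: "a 0*a 0 + a 1*a 1 + a 2*a 2 + a 3*a 3 = 1" using re1 pr by linarith
  have bb: "b 0*b 0 + b 1*b 1 + b 2*b 2 + b 3*b 3 = 1" using re1 pr by linarith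
  have ca: "c 0*a 0 + c 1*a 1 + c 2*a 2 + c 3*a 3 = 0" and cb: "c 0*b 0 + c 1*b 1 + c 2*b 2 + c 3*b 3 = 0"
    and da: "d 0*a 0 + d 1*a 1 + d 2*a 2 + d 3*a 3 = 0" and db: "d 0*b 0 + d 1*b 1 + d 2*b 2 + d 3*b 3 = 0"
    and cc: "c 0*c 0 + c 1*c 1 + c 2*c 2 + c 3*c 3 = 1" and dd: "d 0*d 0 + d 1*d 1 + d 2*d 2 + d 3*d 3 = 1"
    and cd: "c 0*d 0 + c 1*d 1 + c 2*d 2 + c 3*d 3 = 0"
    using assms(5) unfolding perp_onb_def sum4 a_def b_def by auto
  define M where "M i m = (if m = 0 then a i else if m = 1 then b i else if m = 2 then c i else d i)" for i m :: nat
  have G: "(\<Sum>i<4. M i m * M i l) = (if m = l then 1 else 0)" if "m<4" "l<4" for m l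
  proof -
    have "m \<in> {0,1,2,3}" "l \<in> {0,1,2,3}" using that by auto
    thus ?thesis using aa bb ab ca cb da db cc dd cd unfolding sum4 M_def
      by (auto simp: algebra_simps)
  qed
  have rw: "(\<Sum>m<4. M j m * M k m) = 0" if "j<4" "k<4" "j \<noteq> k" for j k
    using rows_orth[of 4 M j k, OF G] that by simp
  have row01: "a 0*a 1 + b 0*b 1 + c 0*c 1 + d 0*d 1 = 0" using rw[of 0 1] by (simp add: sum4 M_def)
  have row12: "a 1*a 2 + b 1*b 2 + c 1*c 2 + d 1*d 2 = 0" using rw[of 1 2] by (simp add: sum4 M_def)
  have row23: "a 2*a 3 + b 2*b 3 + c 2*c 3 + d 2*d 3 = 0" using rw[of 2 3] by (simp add: sum4 M_def)
  have row30: "a 3*a 0 + b 3*b 0 + c 3*c 0 + d 3*d 0 = 0" using rw[of 3 0] by (simp add: sum4 M_def)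
  obtain D where D: "D = 1 \<or> D = -1" and
    W01: "a 2*b 3 - a 3*b 2 = D*(c 0*d 1-c 1*d 0)" and
    W12: "a 0*b 3 - a 3*b 0 = D*(c 1*d 2-c 2*d 1)" and
    W03: "a 1*b 2-a 2*b 1 = D*(c 0*d 3-c 3*d 0)" and
    W23: "a 0*b 1 - a 1*b 0 = D*(c 2*d 3-c 3*d 2)"
    using minors_lemma[OF aa bb ab ca cb da db cc dd cd] by blast
  have DD: "D*D = 1" using D by auto
  define v where "v k = Complex (c k) (d k)" for k
  define DQ where "DQ = dual_quad K c d"
  have vsq: "(v k)^2 = Complex (c k * c k - d k * d k) (2 * c k * d k)" for k
    by (simp add: v_def complex_eq_iff power2_eq_square)
  have vsum: "(v 0)^2 + (v 1)^2 + (v 2)^2 + (v 3)^2 = 0"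
    using cc dd cd unfolding vsq by (simp add: complex_eq_iff algebra_simps)
  have ev: "edge DQ k = (v k)^2" if "k<4" for k
  proof -
    have "k \<in> {0,1,2,3}" using that by auto
    moreover have "(v 3)^2 = - ((v 0)^2 + (v 1)^2 + (v 2)^2)"
      using vsum by (simp add: eq_neg_iff_add_eq_0 algebra_simps)
    ultimately show ?thesis unfolding DQ_def dual_quad_def Let_def edge_def
      by (auto simp: v_def[symmetric] algebra_simps)
  qed
  have yq: "xq DQ k = 2 * Re (cnj (v k) * v ((k+1) mod 4)) * Im (cnj (v k) * v ((k+1) mod 4))" if "k<4" for k
  proof -
    have e2: "edge DQ ((k+1) mod 4) = (v ((k+1) mod 4))^2" by (rule ev) simp
    show ?thesis unfolding xq_def cr_def ev[OF that] e2 im_sq_sq ..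
  qed
  have mods: "(1+1) mod 4 = (2::nat)" "(2+1) mod 4 = (3::nat)" "(3+1) mod 4 = (0::nat)" by simp_all
  have Rk: "R 0 = a 0*a 1 + b 0*b 1" "R 1 = a 1*a 2 + b 1*b 2" "R 2 = a 2*a 3+b 2*b 3" "R 3 = a 3*a 0 + b 3*b 0"
    unfolding R_def mods by (simp_all add: a_def b_def)
  have Ik: "I 0 = a 0*b 1 - a 1*b 0" "I 1 = a 1*b 2 - a 2*b 1" "I 2 = a 2*b 3 - a 3*b 2" "I 3 = -(a 0*b 3 - a 3*b 0)"
    unfolding I_def mods by (simp_all add: a_def b_def algebra_simps)
  have y0: "xq DQ 0 = 2*(-R 0)*(D*I 2)"
  proof -
    have "xq DQ 0 = 2 * (c 0 * c 1 + d 0 * d 1) * (c 0 * d 1 - c 1 * d 0)" using yq[of 0] by (simp add: v_def algebra_simps)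
    also have "c 0 * c 1 + d 0 * d 1 = - R 0" using row01 Rk(1) by linarith
    also have "c 0 * d 1 - c 1 * d 0 = D * I 2"
    proof -
      have "I 2 = a 2*b 3 - a 3*b 2" by (rule Ik(3))
      hence "D * I 2 = D * D * (c 0*d 1-c 1*d 0)" using W01 by simp
      thus ?thesis using DD by simp
    qed
    finally show ?thesis by simp
  qed
  have y1: "xq DQ 1 = 2*(-R 1)*(-D*I 3)"
  proof -
    have "xq DQ 1 = 2 * (c 1 * c 2 + d 1 * d 2) * (c 1 * d 2 - c 2 * d 1)" using yq[of 1] mods by (simp only:) (simp add: v_def algebra_simps)
    also have "c 1 * c 2 + d 1 * d 2 = - R 1" using row12 Rk(2) by linarith
    also have "c 1 * d 2 - c 2 * d 1 = -D * I 3"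
    proof -
      have "I 3 = -(a 0*b 3 - a 3*b 0)" by (rule Ik(4))
      hence "-D * I 3 = D * D * (c 1*d 2-c 2*d 1)" using W12 by simp
      thus ?thesis using DD by simp
    qed
    finally show ?thesis by simp
  qed
  have y2: "xq DQ 2 = 2*(-R 2)*(D*I 0)"
  proof -
    have "xq DQ 2 = 2 * (c 2 * c 3 + d 2 * d 3) * (c 2 * d 3 - c 3 * d 2)" using yq[of 2] mods by (simp only:) (simp add: v_def algebra_simps)
    also have "c 2 * c 3 + d 2 * d 3 = - R 2" using row23 Rk(3) by linarith
    also have "c 2 * d 3 - c 3 * d 2 = D * I 0"
    proof -
      have "I 0 = a 0*b 1 - a 1*b 0" by (rule Ik(1))
      hence "D * I 0 = D * D * (c 2*d 3-c 3*d 2)" using W23 by simp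
      thus ?thesis using DD by simp
    qed
    finally show ?thesis by simp
  qed
  have y3: "xq DQ 3 = 2*(-R 3)*(-D*I 1)"
  proof -
    have "xq DQ 3 = 2 * (c 3 * c 0 + d 3 * d 0) * (c 3 * d 0 - c 0 * d 3)" using yq[of 3] mods by (simp only:) (simp add: v_def algebra_simps)
    also have "c 3 * c 0 + d 3 * d 0 = - R 3" using row30 Rk(4) by linarith
    also have "c 3 * d 0 - c 0 * d 3 = -D * I 1"
    proof -
      have "I 1 = a 1*b 2 - a 2*b 1" by (rule Ik(2))
      hence "-D * I 1 = - (D * D * (c 0*d 3-c 3*d 0))" using W03 by simp
      thus ?thesis using DD by simp
    qed
    finally show ?thesis by simp
  qed
  have x0: "xq Q 0 = 2 * R 0 * I 0" and x1: "xq Q 1 = 2 * R 1 * I 1"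
    and x2: "xq Q 2 = 2 * R 2 * I 2" and x3: "xq Q 3 = 2 * R 3 * I 3" using xRI by auto
  have R0: "R 0 > 0" and R1: "R 1 > 0" and R2: "R 2 > 0" using Rpos by auto
  have cmb: "2*(-R 0)*(D*I 2) \<noteq> 0 \<and> 2*(-R 1)*(-D*I 3) \<noteq> 0 \<and> 2*(-R 2)*(D*I 0) \<noteq> 0 \<and> 2*(-R 3)*(-D*I 1) \<noteq> 0 \<and>
    ((2*(-R 0)*(D*I 2) * (2*(-R 3)*(-D*I 1)) < 0 \<and> 2*(-R 1)*(-D*I 3) * (2*(-R 2)*(D*I 0)) < 0) \<or>
     (2*(-R 0)*(D*I 2) * (2*(-R 1)*(-D*I 3)) < 0 \<and> 2*(-R 2)*(D*I 0) * (2*(-R 3)*(-D*I 1)) < 0))"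
  proof (rule combi[where xa = "xq Q 0" and xb = "xq Q 1" and xc = "xq Q 2" and xd = "xq Q 3"])
    show "R 0 > 0" "R 1 > 0" "R 2 > 0" by (fact R0 R1 R2)+
    show "I 0 \<noteq> 0" "I 1 \<noteq> 0" "I 2 \<noteq> 0" "I 3 \<noteq> 0" "R 3 \<noteq> 0" using IRnz by auto
    show "0 < xq Q 0 \<longleftrightarrow> 0 < I 0" "xq Q 0 < 0 \<longleftrightarrow> I 0 < 0" unfolding x0 using R0
      by (auto simp: zero_less_mult_iff mult_less_0_iff)
    show "0 < xq Q 1 \<longleftrightarrow> 0 < I 1" "xq Q 1 < 0 \<longleftrightarrow> I 1 < 0" unfolding x1 using R1
      by (auto simp: zero_less_mult_iff mult_less_0_iff)
    show "0 < xq Q 2 \<longleftrightarrow> 0 < I 2" "xq Q 2 < 0 \<longleftrightarrow> I 2 < 0" unfolding x2 using R2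
      by (auto simp: zero_less_mult_iff mult_less_0_iff)
    show "0 < xq Q 3 \<longleftrightarrow> 0 < R 3 * I 3" "xq Q 3 < 0 \<longleftrightarrow> R 3 * I 3 < 0" unfolding x3
      by (auto simp: zero_less_mult_iff mult_less_0_iff)
    show "xq Q 0 + xq Q 2 = xq Q 1 + xq Q 3" by (rule xq_area)
    show "xq Q 0 * xq Q 3 \<le> 0 \<and> xq Q 1 * xq Q 2 \<le> 0 \<or> xq Q 0 * xq Q 1 \<le> 0 \<and> xq Q 2 * xq Q 3 \<le> 0"
      by (rule si_nec[OF assms(2)])
    show "D = 1 \<or> D = -1" by (fact D)
  qed
  have ynz: "xq DQ k \<noteq> 0" if "k < 4" for k
  proof -
    have n0: "xq DQ 0 \<noteq> 0" unfolding y0 using cmb by blast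
    have n1: "xq DQ 1 \<noteq> 0" unfolding y1 using cmb by blast
    have n2: "xq DQ 2 \<noteq> 0" unfolding y2 using cmb by blast
    have n3: "xq DQ 3 \<noteq> 0" unfolding y3 using cmb by blast
    have "k = 0 \<or> k = 1 \<or> k = 2 \<or> k = 3" using that by auto
    thus ?thesis using n0 n1 n2 n3 by auto
  qed
  have "self_intersecting DQ"
  proof (rule si_suf[OF ynz])
    show "xq DQ 0 * xq DQ 3 < 0 \<and> xq DQ 1 * xq DQ 2 < 0 \<or> xq DQ 0 * xq DQ 1 < 0 \<and> xq DQ 2 * xq DQ 3 < 0"
      using cmb unfolding y0 y1 y2 y3 by blast
  qed
  thus ?thesis unfolding DQ_def .
qed

end
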